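(* Let $g_1,g_2$ be monic divisors of $x^m-1$ over $\mathbb{F}_{q^2}$, $v_1\in\mathcal{R}$, and let $\mathcal{D}_1$ be the QC code of length $2m$ over $\mathbb{F}_{q^2}$ generated by $(g_1,v_1g_1)$ and $(0,g_2)$. Then $\mathcal{D}_1$ is Hermitian dual-containing iff $g_1\mid g_1^{\perp_H}$, $g_1\mid g_2^{\perp_H}\overline{v_1}^{[q]}$ and $g_2\mid g_2^{\perp_H}(1+v_1\overline{v_1}^{[q]})$.
   Context: $q$ a prime power; $\mathcal{R}=\mathbb{F}_{q^2}[x]/(x^m-1)$, elements identified with representatives of degree $<m$; $[k]=(k_0,\dots,k_{m-1})$; $\overline{k}(x)=k(x^{-1})\bmod(x^m-1)$; $k^{[q]}=\sum k_i^qx^i$; $f^*(x)=x^{\deg f}f(1/x)$; for $k\in\mathcal{R}$, $f=\frac{x^m-1}{\gcd(k,x^m-1)}$, $k^{\perp}=f(0)^{-1}f^*$, $k^{\perp_H}=(k^{[q]})^{\perp}$. "$g\mid a$" for $g\mid x^m-1$ means $g$ divides the representative of $a$. The QC code generated by $(u_{i1},u_{i2})$, $i=1,2$, is $\{([r_1u_{11}+r_2u_{21}],[r_1u_{12}+r_2u_{22}]):r_i\in\mathcal{R}\}$. Hermitian inner product $\sum u_i^qv_i$; dual-containing means $\mathcal{D}_1^{\perp_H}\subseteq\mathcal{D}_1$. *)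

theory Defs
  imports "HOL-Computational_Algebra.Computational_Algebra" "HOL-Library.Cardinality"
begin

(* The ring R = F[x]/(x^m - 1); elements are represented by polynomials of degree < m. *)
definition xm1 :: "nat \<Rightarrow> 'a::field_gcd poly" where
  "xm1 m = monom 1 m - 1"

definition rep :: "nat \<Rightarrow> 'a::field_gcd poly \<Rightarrow> 'a poly" where
  "rep m a = a mod xm1 m"

(* overline: k(x^{-1}) mod (x^m - 1) *)
definition cbar :: "nat \<Rightarrow> 'a::field_gcd poly \<Rightarrow> 'a poly" where
  "cbar m k = rep m (\<Sum>i<m. monom (coeff (rep m k) i) ((m - i) mod m))"

definition frob :: "nat \<Rightarrow> 'a::field_gcd poly \<Rightarrow> 'a poly" where
  "frob q k = map_poly (\<lambda>c. c ^ q) k"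

definition cperp :: "nat \<Rightarrow> 'a::field_gcd poly \<Rightarrow> 'a poly" where
  "cperp m k = (let f = xm1 m div gcd (rep m k) (xm1 m)
                in smult (inverse (coeff f 0)) (reflect_poly f))"

definition cperpH :: "nat \<Rightarrow> nat \<Rightarrow> 'a::field_gcd poly \<Rightarrow> 'a poly" where
  "cperpH q m k = cperp m (frob q k)"

definition rdvd :: "nat \<Rightarrow> 'a::field_gcd poly \<Rightarrow> 'a poly \<Rightarrow> bool" where
  "rdvd m g a \<longleftrightarrow> g dvd rep m a"

(* ambient space F^{2m}: pairs of coefficient vectors, each encoded as polynomial of degree < m *)
definition ambient :: "nat \<Rightarrow> ('a::field_gcd poly \<times> 'a poly) set" where
  "ambient m = {(a, b). degree a < m \<and> degree b < m}"

definition qc_code :: "nat \<Rightarrow> 'a::field_gcd poly \<Rightarrow> 'a poly \<Rightarrow> 'a poly \<Rightarrow> 'a poly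
    \<Rightarrow> ('a poly \<times> 'a poly) set" where
  "qc_code m u11 u12 u21 u22 =
     {(rep m (r1 * u11 + r2 * u21), rep m (r1 * u12 + r2 * u22)) | r1 r2. True}"

definition herm :: "nat \<Rightarrow> nat \<Rightarrow> ('a::field_gcd poly \<times> 'a poly) \<Rightarrow> ('a poly \<times> 'a poly) \<Rightarrow> 'a" where
  "herm q m u v = (\<Sum>i<m. coeff (fst u) i ^ q * coeff (fst v) i)
                 + (\<Sum>i<m. coeff (snd u) i ^ q * coeff (snd v) i)"

definition herm_dual :: "nat \<Rightarrow> nat \<Rightarrow> ('a::field_gcd poly \<times> 'a poly) set \<Rightarrow> ('a poly \<times> 'a poly) set" where
  "herm_dual q m C = {u \<in> ambient m. \<forall>c\<in>C. herm q m u c = 0}"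

definition herm_dual_containing :: "nat \<Rightarrow> nat \<Rightarrow> ('a::field_gcd poly \<times> 'a poly) set \<Rightarrow> bool" where
  "herm_dual_containing q m C \<longleftrightarrow> herm_dual q m C \<subseteq> C"

end

theory Submission imports Defs begin

lemma of_nat_card_zero: "of_nat CARD('a::{finite,field}) = (0::'a)"
proof -
  have "(\<Sum>x\<in>UNIV. x + 1) = (\<Sum>x\<in>(UNIV::'a set). x)"
    by (rule sum.reindex_bij_witness[of _ "\<lambda>x. x - 1" "\<lambda>x. x + 1"]) auto
  then have "(\<Sum>x\<in>(UNIV::'a set). x) + of_nat CARD('a) = (\<Sum>x\<in>(UNIV::'a set). x)"
    by (simp add: sum.distrib)
  then show ?thesis by simp
qed

lemma power_card_same: "(x::'a::{finite,field}) ^ CARD('a) = x"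
proof (cases "x = 0")
  case False
  have "x * (\<Prod>y\<in>UNIV-{0}. x * y) = x * x ^ (card (UNIV :: 'a set) - 1) * \<Prod>(UNIV-{0})"
    by (simp add: prod.distrib mult_ac)
  also have "x * x ^ (card (UNIV :: 'a set) - 1) = x ^ Suc (card (UNIV :: 'a set) - 1)"
    by (subst power_Suc) auto
  also have "Suc (card (UNIV :: 'a set) - 1) = card (UNIV :: 'a set)"
    using finite_UNIV_card_ge_0[where ?'a = 'a] by simp
  also have "(\<Prod>y\<in>UNIV-{0}. x * y) = (\<Prod>y\<in>UNIV-{0}. y)"
    by (rule prod.reindex_bij_witness[of _ "\<lambda>y. y / x" "\<lambda>y. x * y"]) (use False in auto)
  finally show ?thesis
    by simp
qed (use finite_UNIV_card_ge_0[where ?'a = 'a] in auto)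

lemma frob_facts:
  fixes q :: nat
  assumes "\<exists>p e. prime p \<and> e > 0 \<and> q = p ^ e" and "CARD('a::{finite,field}) = q ^ 2"
  shows "q > 0" "\<And>x y::'a. (x + y) ^ q = x ^ q + y ^ q" "\<And>x::'a. (x ^ q) ^ q = x"
proof -
  obtain p e where pe: "prime p" "e > 0" "q = p ^ e" using assms(1) by blast
  show "q > 0" using pe prime_gt_0_nat by simp
  have cpos: "CHAR('a) > 0" by (rule finite_imp_CHAR_pos) simp
  have cpr: "prime CHAR('a)" using cpos prime_CHAR_semidom by blast
  have "CHAR('a) dvd CARD('a)" using of_nat_card_zero[where 'a='a] of_nat_eq_0_iff_char_dvd by blast
  then have "CHAR('a) dvd p ^ (2*e)" using assms(2) pe by (metis power_mult mult.commute)
  then have "CHAR('a) dvd p" using cpr prime_dvd_power by blast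
  then have cp: "CHAR('a) = p" using cpr pe(1) primes_dvd_imp_eq by blast
  show "\<And>x y::'a. (x + y) ^ q = x ^ q + y ^ q"
    by (rule freshmans_dream') (use cpr cp pe in auto)
  show "\<And>x::'a. (x ^ q) ^ q = x"
    using power_card_same assms(2) by (metis power2_eq_square power_mult)
qed


definition tau :: "nat \<Rightarrow> 'a::field_gcd poly \<Rightarrow> 'a poly" where
  "tau m p = pcompose p (monom 1 (m - 1))"

definition eqm :: "nat \<Rightarrow> 'a::field_gcd poly \<Rightarrow> 'a poly \<Rightarrow> bool" where
  "eqm m a b \<longleftrightarrow> rep m a = rep m b"

lemma eqm_dvd: "eqm m a b \<longleftrightarrow> xm1 m dvd a - b"
  unfolding eqm_def rep_def by (rule mod_eq_dvd_iff)

lemma eqm_refl[simp]: "eqm m a a" by (simp add: eqm_def)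
lemma eqm_sym: "eqm m a b \<Longrightarrow> eqm m b a" by (simp add: eqm_def)
lemma eqm_trans[trans]: "eqm m a b \<Longrightarrow> eqm m b c \<Longrightarrow> eqm m a c" by (simp add: eqm_def)
lemma eqm_add: "eqm m a b \<Longrightarrow> eqm m c d \<Longrightarrow> eqm m (a + c) (b + d)"
  unfolding eqm_def rep_def by (rule mod_add_cong)
lemma eqm_mult: "eqm m a b \<Longrightarrow> eqm m c d \<Longrightarrow> eqm m (a * c) (b * d)"
  unfolding eqm_def rep_def by (rule mod_mult_cong)
lemma eqm_diff: "eqm m a b \<Longrightarrow> eqm m c d \<Longrightarrow> eqm m (a - c) (b - d)"
  unfolding eqm_def rep_def by (rule mod_diff_cong)
lemma eqm_uminus: "eqm m a b \<Longrightarrow> eqm m (- a) (- b)"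
  using eqm_diff[of m 0 0 a b] by simp
lemma eqm_0: "eqm m a 0 \<longleftrightarrow> xm1 m dvd a" by (simp add: eqm_dvd)
lemma eqm_rep: "eqm m (rep m a) a" by (simp add: eqm_def rep_def)
lemma eqm_dvd_iff: "eqm m a b \<Longrightarrow> xm1 m dvd a \<longleftrightarrow> xm1 m dvd b"
  by (metis eqm_0 eqm_sym eqm_trans)
lemma eqm_dvd_trans: "eqm m a b \<Longrightarrow> xm1 m dvd b \<Longrightarrow> xm1 m dvd a"
  by (metis eqm_0 eqm_trans)

lemma xm1_coeff: "coeff (xm1 m) n = (if n = m then 1 else 0) - (if n = 0 then 1 else 0)"
  by (simp add: xm1_def coeff_monom)

lemma degree_xm1: "m > 0 \<Longrightarrow> degree (xm1 m :: 'a::field_gcd poly) = m"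
proof (rule order_antisym)
  show "degree (xm1 m :: 'a poly) \<le> m" by (rule degree_le) (auto simp: xm1_coeff)
  assume "m > 0"
  then show "m \<le> degree (xm1 m :: 'a poly)" by (intro le_degree) (simp add: xm1_coeff)
qed

lemma xm1_nz: "m > 0 \<Longrightarrow> xm1 m \<noteq> (0 :: 'a::field_gcd poly)"
proof -
  assume "m > 0"
  then have "coeff (xm1 m :: 'a poly) m = 1" by (simp add: xm1_coeff)
  then show ?thesis by auto
qed

lemma lead_xm1: "m > 0 \<Longrightarrow> lead_coeff (xm1 m :: 'a::field_gcd poly) = 1"
  by (simp add: degree_xm1 xm1_coeff)

lemma coeff0_xm1: "m > 0 \<Longrightarrow> coeff (xm1 m :: 'a::field_gcd poly) 0 = -1"
  by (simp add: xm1_coeff)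

lemma xm1_dvd_pow: "xm1 m dvd (monom (1::'a::field_gcd) (m * j) - 1)"
proof (induction j)
  case 0 then show ?case by (simp add: one_pCons monom_0)
next
  case (Suc j)
  have eq: "monom (1::'a) (m * Suc j) - 1 = monom 1 m * (monom 1 (m * j) - 1) + xm1 m"
    by (simp add: xm1_def mult_monom algebra_simps)
  show ?case unfolding eq using Suc by (intro dvd_add dvd_mult) auto
qed

lemma eqm_monom: "eqm m (monom (c::'a::field_gcd) k) (monom c (k mod m))"
proof -
  have "monom c k = monom c (k mod m) * monom 1 (m * (k div m))"
    by (simp add: mult_monom)
  then have "monom c k - monom c (k mod m) = monom c (k mod m) * (monom 1 (m * (k div m)) - 1)"
    by (simp add: algebra_simps)
  then show ?thesis unfolding eqm_dvd
    using xm1_dvd_pow by (metis dvd_mult)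
qed

lemma rep_small: "degree a < m \<Longrightarrow> rep m (a::'a::field_gcd poly) = a"
  unfolding rep_def by (rule mod_poly_less) (simp add: degree_xm1)

lemma rep_monom: "m > 0 \<Longrightarrow> rep m (monom (c::'a::field_gcd) k) = monom c (k mod m)"
proof -
  assume m: "m > 0"
  have "rep m (monom c k) = rep m (monom c (k mod m))" using eqm_monom unfolding eqm_def by blast
  also have "\<dots> = monom c (k mod m)"
    by (rule rep_small) (use m in \<open>auto simp: degree_monom_le intro: le_less_trans[OF degree_monom_le]\<close>)
  finally show ?thesis .
qed

lemma degree_rep: "m > 0 \<Longrightarrow> degree (rep m (a::'a::field_gcd poly)) < m"
  unfolding rep_def
  by (metis degree_mod_less' degree_xm1 xm1_nz bot_nat_0.not_eq_extremum degree_0)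

lemma rep_add: "rep m (a + b) = rep m a + rep m (b::'a::field_gcd poly)"
  unfolding rep_def by (rule poly_mod_add_left)

lemma rep_sum: "finite A \<Longrightarrow> rep m (\<Sum>i\<in>A. f i) = (\<Sum>i\<in>A. rep m (f i :: 'a::field_gcd poly))"
  by (induction A rule: finite_induct) (auto simp: rep_add, simp add: rep_def)


definition kap :: "nat \<Rightarrow> nat \<Rightarrow> 'a::field_gcd poly \<Rightarrow> 'a poly" where
  "kap q m a = frob q (cbar m a)"

lemma reflect_xm1: "m > 0 \<Longrightarrow> reflect_poly (xm1 m) = - (xm1 m :: 'a::field_gcd poly)"
  by (rule poly_eqI) (auto simp: coeff_reflect_poly degree_xm1 xm1_coeff)

context
  fixes q m :: nat
  assumes qpos: "q > 0" and mpos: "m > 0"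
    and fadd: "\<And>x y::'a::field_gcd. (x + y) ^ q = x ^ q + y ^ q"
    and finv: "\<And>x::'a. (x ^ q) ^ q = x"
begin

lemma fzero: "(0::'a) ^ q = 0" using qpos by simp

lemma fneg: "(- x::'a) ^ q = - (x ^ q)"
proof -
  have "x ^ q + (- x) ^ q = 0" using fadd[of x "-x"] fzero by simp
  then show ?thesis by (simp add: eq_neg_iff_add_eq_0 add.commute)
qed

lemma fnz: "(x::'a) \<noteq> 0 \<Longrightarrow> x ^ q \<noteq> 0" using qpos by simp

lemma coeff_frob: "coeff (frob q p) n = (coeff p n :: 'a) ^ q"
  unfolding frob_def by (simp add: coeff_map_poly fzero)

lemma degree_frob: "degree (frob q (p::'a poly)) = degree p"
  unfolding frob_def by (rule degree_map_poly) simp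

lemma frob_add: "frob q (a + b) = frob q a + frob q (b::'a poly)"
  by (rule poly_eqI) (simp add: coeff_frob fadd)

lemma frob_uminus: "frob q (- a) = - frob q (a::'a poly)"
  by (rule poly_eqI) (simp add: coeff_frob fneg)

lemma frob_diff: "frob q (a - b) = frob q a - frob q (b::'a poly)"
  using frob_add[of a "-b"] frob_uminus[of b] by simp

lemma frob_0[simp]: "frob q (0::'a poly) = 0"
  by (rule poly_eqI) (simp add: coeff_frob fzero)

lemma frob_smult: "frob q (smult c a) = smult (c ^ q) (frob q (a::'a poly))"
  by (rule poly_eqI) (simp add: coeff_frob power_mult_distrib)

lemma frob_pCons: "frob q (pCons c a) = pCons (c ^ q) (frob q (a::'a poly))"
  by (rule poly_eqI) (simp add: coeff_frob coeff_pCons fzero split: nat.split)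

lemma frob_mult: "frob q (a * b) = frob q a * frob q (b::'a poly)"
proof (induction a)
  case 0 then show ?case by simp
next
  case (pCons c a)
  show ?case using qpos by (simp add: frob_add frob_smult frob_pCons pCons.IH)
qed

lemma frob_frob: "frob q (frob q a) = (a::'a poly)"
  by (rule poly_eqI) (simp add: coeff_frob finv)

lemma frob_monom: "frob q (monom c n) = monom ((c::'a) ^ q) n"
  by (rule poly_eqI) (simp add: coeff_frob coeff_monom fzero)

lemma frob_1[simp]: "frob q (1::'a poly) = 1"
  by (rule poly_eqI) (simp add: coeff_frob coeff_1 fzero)

lemma frob_xm1: "frob q (xm1 m) = (xm1 m :: 'a poly)"
  by (simp add: xm1_def frob_diff frob_monom)

lemma frob_pcompose: "frob q (pcompose p y) = pcompose (frob q p) (frob q (y::'a poly))"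
proof (induction p)
  case 0 then show ?case by simp
next
  case (pCons c p)
  show ?case by (simp add: pcompose_pCons frob_pCons frob_add frob_mult pCons.IH frob_monom flip: monom_0)
qed

lemma frob_reflect: "frob q (reflect_poly p) = reflect_poly (frob q (p::'a poly))"
  by (rule poly_eqI) (simp add: coeff_frob coeff_reflect_poly degree_frob fzero)

lemma frob_eqm: "eqm m a b \<Longrightarrow> eqm m (frob q a) (frob q (b::'a poly))"
  unfolding eqm_dvd by (metis dvd_def frob_diff frob_mult frob_xm1)

lemma lead_frob: "lead_coeff (frob q p) = (lead_coeff (p::'a poly)) ^ q"
  by (simp add: coeff_frob degree_frob)


lemma eqm_sum: "(\<And>i. i \<in> A \<Longrightarrow> eqm m (f i) (g i)) \<Longrightarrow> eqm m (sum f A) (sum g A :: 'a poly)"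
proof (cases "finite A")
  case True
  assume h: "\<And>i. i \<in> A \<Longrightarrow> eqm m (f i) (g i)"
  have "rep m (sum f A) = (\<Sum>i\<in>A. rep m (f i))" using True by (rule rep_sum)
  also have "\<dots> = (\<Sum>i\<in>A. rep m (g i))" using h by (auto simp: eqm_def intro: sum.cong)
  also have "\<dots> = rep m (sum g A)" using True by (rule rep_sum[symmetric])
  finally show ?thesis by (simp add: eqm_def)
qed simp

lemma pcompose_monom: "pcompose (monom c i) y = smult c (y ^ i)"
proof (induction i)
  case 0 then show ?case by (simp add: monom_0)
next
  case (Suc i)
  have "monom c (Suc i) = pCons 0 (monom c i)" by (simp add: monom_Suc)
  then show ?case by (simp add: pcompose_pCons Suc.IH)
qed

lemma tau_monom: "tau m (monom c i) = monom (c::'a) ((m - 1) * i)"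
  by (simp add: tau_def pcompose_monom monom_power smult_monom mult.commute)

lemma tau_add: "tau m (a + b) = tau m a + tau m (b::'a poly)" by (simp add: tau_def pcompose_add)
lemma tau_diff: "tau m (a - b) = tau m a - tau m (b::'a poly)" by (simp add: tau_def pcompose_diff)
lemma tau_mult: "tau m (a * b) = tau m a * tau m (b::'a poly)" by (simp add: tau_def pcompose_mult)
lemma tau_sum: "tau m (sum f A) = (\<Sum>i\<in>A. tau m (f i :: 'a poly))" by (simp add: tau_def pcompose_sum)
lemma tau_1: "tau m (1::'a poly) = 1" by (simp add: tau_def pcompose_1)
lemma tau_0: "tau m (0::'a poly) = 0" by (simp add: tau_def)
lemma tau_const: "tau m [:c:] = [:c::'a:]" by (simp add: tau_def)
lemma tau_pCons: "tau m (pCons c p) = [:c:] + monom 1 (m - 1) * tau m (p::'a poly)"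
  by (simp add: tau_def pcompose_pCons)

lemma tau_xm1: "xm1 m dvd tau m (xm1 m :: 'a poly)"
proof -
  have "tau m (xm1 m :: 'a poly) = monom 1 (m * (m - 1)) - 1"
    by (simp add: xm1_def tau_diff tau_monom tau_1 mult.commute)
  then show ?thesis using xm1_dvd_pow by metis
qed

lemma tau_eqm: "eqm m a b \<Longrightarrow> eqm m (tau m a) (tau m (b::'a poly))"
  unfolding eqm_dvd tau_diff[symmetric]
  by (metis dvd_def dvd_mult_left tau_mult tau_xm1 mult.commute)

lemma pcomp2_eqm: "eqm m y z \<Longrightarrow> eqm m (pcompose p y) (pcompose p (z::'a poly))"
proof (induction p)
  case 0 then show ?case by simp
next
  case (pCons c p)
  show ?case unfolding pcompose_pCons
    by (intro eqm_add eqm_mult eqm_refl pCons.prems pCons.IH)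
qed

lemma sq_mod: "((m - 1) * (m - 1)) mod m = 1 mod m"
proof (cases "m \<ge> 2")
  case True
  then have "(m - 1) * (m - 1) = 1 + (m - 2) * m"
    by (cases m) (auto simp: algebra_simps numeral_2_eq_2 split: nat.splits)
  then show ?thesis by (metis mod_mult_self1)
next
  case False
  then have "m = 1" using mpos by simp
  then show ?thesis by simp
qed

lemma tau_tau: "eqm m (tau m (tau m a)) (a::'a poly)"
proof -
  have "tau m (tau m a) = pcompose a (pcompose (monom 1 (m - 1)) (monom 1 (m - 1)))"
    by (simp add: tau_def pcompose_assoc)
  also have "pcompose (monom 1 (m - 1)) (monom (1::'a) (m - 1)) = monom 1 ((m - 1) * (m - 1))"
    by (simp add: pcompose_monom monom_power)
  finally have e: "tau m (tau m a) = pcompose a (monom 1 ((m - 1) * (m - 1)))" .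
  have "eqm m (monom (1::'a) ((m - 1) * (m - 1))) (monom 1 (1 mod m))"
    using eqm_monom[of m 1 "(m - 1) * (m - 1)"] sq_mod by simp
  also have "eqm m (monom (1::'a) (1 mod m)) (monom 1 1)"
    using eqm_sym[OF eqm_monom[of m 1 1]] by simp
  finally have "eqm m (pcompose a (monom 1 ((m - 1) * (m - 1)))) (pcompose a (monom 1 1))"
    by (rule pcomp2_eqm)
  moreover have "monom (1::'a) 1 = [:0, 1:]" by (simp add: monom_Suc monom_0)
  ultimately show ?thesis using e by simp
qed

lemma frob_tau: "frob q (tau m a) = tau m (frob q (a::'a poly))"
  by (simp add: tau_def frob_pcompose frob_monom)

lemma mod_lemma: "i < m \<Longrightarrow> ((m - 1) * i) mod m = (m - i) mod m"
proof (cases i)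
  case 0 then show ?thesis by simp
next
  case (Suc j)
  assume "i < m"
  then have "(m - 1) * i = (m - i) + m * j" using Suc
    by (cases m) (auto simp: algebra_simps)
  then show ?thesis by simp
qed

lemma cbar_tau: "cbar m a = rep m (tau m (a::'a poly))"
proof -
  let ?r = "rep m a"
  have dr: "degree ?r \<le> m - 1" using degree_rep[OF mpos, of a] by simp
  have rs: "?r = (\<Sum>i<m. monom (coeff ?r i) i)"
    using poly_as_sum_of_monoms'[OF dr] mpos
    by (metis Suc_diff_1 lessThan_Suc_atMost)
  have "eqm m (\<Sum>i<m. monom (coeff ?r i) ((m - i) mod m)) (\<Sum>i<m. monom (coeff ?r i) ((m - 1) * i))"
  proof (rule eqm_sum)
    fix i assume "i \<in> {..<m}"
    then have "((m - 1) * i) mod m = (m - i) mod m" using mod_lemma by simp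
    then have "eqm m (monom (coeff ?r i) ((m - 1) * i)) (monom (coeff ?r i) ((m - i) mod m))"
      using eqm_monom[of m "coeff ?r i" "(m - 1) * i"] eqm_monom[of m "coeff ?r i" "(m - i) mod m"]
      by (metis eqm_sym eqm_trans mod_mod_trivial)
    then show "eqm m (monom (coeff ?r i) ((m - i) mod m)) (monom (coeff ?r i) ((m - 1) * i))"
      by (rule eqm_sym)
  qed
  also have "(\<Sum>i<m. monom (coeff ?r i) ((m - 1) * i)) = tau m ?r"
  proof -
    have "tau m (\<Sum>i<m. monom (coeff ?r i) i) = (\<Sum>i<m. tau m (monom (coeff ?r i) i))"
      by (simp add: tau_def pcompose_sum)
    then show ?thesis using rs by (simp add: tau_monom)
  qed
  also have "eqm m (tau m ?r) (tau m a)" by (rule tau_eqm) (rule eqm_rep)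
  finally show ?thesis unfolding cbar_def eqm_def by simp
qed

lemma reflect_tau: "eqm m (monom 1 (degree p) * tau m p) (reflect_poly (p::'a poly))"
proof (induction p rule: pCons_induct)
  case 0 then show ?case by (simp add: tau_0)
next
  case (pCons c p)
  show ?case
  proof (cases "p = 0")
    case True then show ?thesis by (simp add: tau_const)
  next
    case False
    let ?d = "degree p"
    have "monom 1 (degree (pCons c p)) * tau m (pCons c p)
        = monom c (Suc ?d) + monom 1 (?d + m) * tau m p"
      using False mpos by (simp add: tau_pCons algebra_simps mult_monom flip: monom_0)
    also have "eqm m (monom 1 (?d + m) * tau m p) (monom 1 ?d * tau m p)"
    proof -
      have "eqm m (monom (1::'a) (?d + m)) (monom 1 ?d)"
        unfolding eqm_dvd
      proof -
        have "monom (1::'a) (?d + m) - monom 1 ?d = monom 1 ?d * xm1 m"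
          by (simp add: xm1_def algebra_simps mult_monom)
        then show "xm1 m dvd monom (1::'a) (?d + m) - monom 1 ?d" by simp
      qed
      then show ?thesis by (intro eqm_mult eqm_refl)
    qed
    then have "eqm m (monom c (Suc ?d) + monom 1 (?d + m) * tau m p) (monom c (Suc ?d) + reflect_poly p)"
      using pCons.IH by (intro eqm_add eqm_refl) (rule eqm_trans)
    also have "monom c (Suc ?d) + reflect_poly p = reflect_poly (pCons c p)"
      using False by (simp add: reflect_poly_pCons')
    finally show ?thesis .
  qed
qed

lemma unit_cancel: "xm1 m dvd monom 1 d * w \<Longrightarrow> xm1 m dvd (w::'a poly)"
proof -
  assume h: "xm1 m dvd monom 1 d * w"
  have "monom 1 ((m - 1) * d) * (monom 1 d * w) = monom 1 (m * d) * w"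
    using mpos by (simp add: mult_monom algebra_simps flip: mult.assoc)
  moreover have "eqm m (monom (1::'a) (m * d) * w) w"
    unfolding eqm_dvd
  proof -
    have "monom (1::'a) (m * d) * w - w = (monom 1 (m * d) - 1) * w" by (simp add: algebra_simps)
    then show "xm1 m dvd monom (1::'a) (m * d) * w - w" using xm1_dvd_pow[where 'a='a, of m d] by (metis dvd_mult2)
  qed
  ultimately show ?thesis using h
    by (metis dvd_mult eqm_0 eqm_sym eqm_trans)
qed


lemma kap_tau: "eqm m (kap q m a) (tau m (frob q (a::'a poly)))"
proof -
  have "eqm m (frob q (rep m (tau m a))) (frob q (tau m a))" by (intro frob_eqm eqm_rep)
  then show ?thesis by (simp add: kap_def cbar_tau frob_tau)
qed

lemma kp_eqm: "eqm m a b \<Longrightarrow> eqm m (tau m (frob q a)) (tau m (frob q (b::'a poly)))"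
  by (intro tau_eqm frob_eqm)

lemma kap_cong: "eqm m a b \<Longrightarrow> kap q m a = kap q m (b::'a poly)"
  by (simp add: kap_def cbar_def eqm_def)

lemma kap_0: "kap q m (0::'a poly) = 0"
  by (simp add: kap_def cbar_def rep_def)

lemma kap_mult: "eqm m (kap q m (a * b)) (kap q m a * kap q m (b::'a poly))"
proof -
  have "eqm m (kap q m (a * b)) (tau m (frob q a) * tau m (frob q b))"
    using kap_tau[of "a * b"] by (simp add: frob_mult tau_mult)
  also have "eqm m (tau m (frob q a) * tau m (frob q b)) (kap q m a * kap q m b)"
    by (intro eqm_mult eqm_sym[OF kap_tau])
  finally show ?thesis .
qed

lemma kap_add: "eqm m (kap q m (a + b)) (kap q m a + kap q m (b::'a poly))"
proof -
  have "eqm m (kap q m (a + b)) (tau m (frob q a) + tau m (frob q b))"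
    using kap_tau[of "a + b"] by (simp add: frob_add tau_add)
  also have "eqm m (tau m (frob q a) + tau m (frob q b)) (kap q m a + kap q m b)"
    by (intro eqm_add eqm_sym[OF kap_tau])
  finally show ?thesis .
qed

lemma kap_kap: "eqm m (kap q m (kap q m a)) (a::'a poly)"
proof -
  have "eqm m (kap q m (kap q m a)) (tau m (frob q (kap q m a)))" by (rule kap_tau)
  also have "eqm m (tau m (frob q (kap q m a))) (tau m (frob q (tau m (frob q a))))"
    by (intro kp_eqm kap_tau)
  also have "tau m (frob q (tau m (frob q a))) = tau m (tau m a)"
    by (simp add: frob_tau frob_frob)
  also have "eqm m (tau m (tau m a)) a" by (rule tau_tau)
  finally show ?thesis .
qed

lemma kap_dvd: "xm1 m dvd a \<Longrightarrow> xm1 m dvd kap q m (a::'a poly)"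
  using kap_cong[of a 0] kap_0 by (simp add: eqm_0)

lemma kap_dvd_iff: "xm1 m dvd kap q m a \<longleftrightarrow> xm1 m dvd (a::'a poly)"
  using kap_dvd kap_kap by (metis eqm_0 eqm_sym eqm_trans)

lemma lemmaQ:
  assumes AB: "A * B = (xm1 m :: 'a poly)"
  shows "xm1 m dvd c * tau m A \<longleftrightarrow> reflect_poly B dvd c"
proof -
  let ?d = "degree A"
  have Anz: "A \<noteq> 0" using AB xm1_nz[OF mpos] by auto
  have "xm1 m dvd c * tau m A \<longleftrightarrow> xm1 m dvd monom 1 ?d * (c * tau m A)"
    using unit_cancel dvd_mult by blast
  also have "\<dots> \<longleftrightarrow> xm1 m dvd c * reflect_poly A"
  proof -
    have "monom 1 ?d * (c * tau m A) = c * (monom 1 ?d * tau m A)" by (simp add: algebra_simps)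
    moreover have "eqm m (c * (monom 1 ?d * tau m A)) (c * reflect_poly A)"
      by (intro eqm_mult eqm_refl reflect_tau)
    ultimately show ?thesis by (metis eqm_0 eqm_sym eqm_trans)
  qed
  also have "\<dots> \<longleftrightarrow> reflect_poly A * reflect_poly B dvd reflect_poly A * c"
  proof -
    have "reflect_poly A * reflect_poly B = - xm1 m"
      using AB reflect_xm1[OF mpos] by (metis reflect_poly_mult)
    then show ?thesis by (simp add: mult.commute)
  qed
  also have "\<dots> \<longleftrightarrow> reflect_poly B dvd c"
    using Anz by (simp add: dvd_times_left_cancel_iff)
  finally show ?thesis .
qed

lemma coeff0_div:
  assumes "g * h = (xm1 m :: 'a poly)"
  shows "coeff g 0 \<noteq> 0" "coeff h 0 \<noteq> 0"
proof -
  have "coeff g 0 * coeff h 0 = -1" using assms coeff0_xm1[OF mpos] by (metis coeff_mult_0)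
  then show "coeff g 0 \<noteq> 0" "coeff h 0 \<noteq> 0" by auto
qed

lemma perp_form:
  assumes mon: "lead_coeff g = 1" and gh: "g * h = (xm1 m :: 'a poly)"
  shows "cperpH q m g = smult (inverse (coeff (frob q h) 0)) (reflect_poly (frob q h))"
    and "frob q g * frob q h = xm1 m"
    and "coeff (frob q h) 0 \<noteq> 0"
proof -
  show fgh: "frob q g * frob q h = xm1 m" using gh by (metis frob_mult frob_xm1)
  have Xnz: "xm1 m \<noteq> (0::'a poly)" by (rule xm1_nz[OF mpos])
  have fgnz: "frob q g \<noteq> 0" using fgh Xnz by auto
  have lf: "lead_coeff (frob q g) = 1" using mon by (simp add: lead_frob)
  have "gcd (rep m (frob q g)) (xm1 m) = gcd (frob q g) (xm1 m)"
    unfolding rep_def using Xnz by (rule gcd_mod_left)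
  also have "\<dots> = normalize (frob q g)"
    by (rule gcd_proj1_if_dvd) (metis fgh dvd_triv_left)
  also have "\<dots> = frob q g" using lf by (simp add: normalize_poly_def flip: one_pCons)
  finally have gg: "gcd (rep m (frob q g)) (xm1 m) = frob q g" .
  have "xm1 m div frob q g = frob q h" using fgh fgnz by (metis nonzero_mult_div_cancel_left)
  then show "cperpH q m g = smult (inverse (coeff (frob q h) 0)) (reflect_poly (frob q h))"
    by (simp add: cperpH_def cperp_def gg Let_def)
  show "coeff (frob q h) 0 \<noteq> 0" using coeff0_div(2)[OF fgh] .
qed


lemma Plemma:
  assumes mon: "lead_coeff g = 1" and gd: "g dvd (xm1 m :: 'a poly)"
  shows "xm1 m dvd kap q m b * g \<longleftrightarrow> cperpH q m g dvd b"
proof -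
  obtain h where gh: "xm1 m = g * h" using gd by (auto simp: dvd_def)
  note pf = perp_form[OF mon gh[symmetric]]
  have "xm1 m dvd kap q m b * g \<longleftrightarrow> xm1 m dvd kap q m (kap q m b * g)"
    by (simp add: kap_dvd_iff)
  also have "\<dots> \<longleftrightarrow> xm1 m dvd b * tau m (frob q g)"
  proof -
    have "eqm m (kap q m (kap q m b * g)) (kap q m (kap q m b) * kap q m g)" by (rule kap_mult)
    also have "eqm m (kap q m (kap q m b) * kap q m g) (b * tau m (frob q g))"
      by (intro eqm_mult kap_kap kap_tau)
    finally show ?thesis by (metis eqm_0 eqm_sym eqm_trans)
  qed
  also have "\<dots> \<longleftrightarrow> reflect_poly (frob q h) dvd b" by (rule lemmaQ[OF pf(2)])
  also have "\<dots> \<longleftrightarrow> cperpH q m g dvd b" using pf(1,3) by (simp add: smult_dvd_iff)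
  finally show ?thesis .
qed

lemma perp_dvd:
  assumes mon: "lead_coeff g = 1" and gd: "g dvd (xm1 m :: 'a poly)"
  shows "cperpH q m g dvd xm1 m"
proof -
  obtain h where gh: "xm1 m = g * h" using gd by (auto simp: dvd_def)
  note pf = perp_form[OF mon gh[symmetric]]
  have "reflect_poly (frob q g) * reflect_poly (frob q h) = - xm1 m"
    using pf(2) reflect_xm1[OF mpos] by (metis reflect_poly_mult)
  then have "reflect_poly (frob q h) dvd xm1 m" by (metis dvd_minus_iff dvd_triv_right)
  then show ?thesis using pf(1,3) by (simp add: smult_dvd)
qed

lemma Dlemma:
  assumes mon: "lead_coeff g = 1" and gd: "g dvd (xm1 m :: 'a poly)"
    and h: "xm1 m dvd kap q m c * cperpH q m g"
  shows "g dvd c"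
proof -
  obtain h where gh: "xm1 m = g * h" using gd by (auto simp: dvd_def)
  note pf = perp_form[OF mon gh[symmetric]]
  define u where "u = inverse (coeff (frob q h) 0)"
  have unz: "u \<noteq> 0" using pf(3) by (simp add: u_def)
  define P where "P = cperpH q m g"
  have P: "P = smult u (reflect_poly (frob q h))" using pf(1) by (simp add: P_def u_def)
  define B0 where "B0 = smult (- inverse u) (reflect_poly (frob q g))"
  have rr: "reflect_poly (frob q g) * reflect_poly (frob q h) = - xm1 m"
    using pf(2) reflect_xm1[OF mpos] by (metis reflect_poly_mult)
  have PB: "P * B0 = xm1 m"
  proof -
    have "P * B0 = smult (u * (- inverse u)) (reflect_poly (frob q g) * reflect_poly (frob q h))"
      by (simp add: P B0_def algebra_simps)
    also have "\<dots> = xm1 m" using unz rr by simp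
    finally show ?thesis .
  qed
  have fPB: "frob q P * frob q B0 = xm1 m" using PB by (metis frob_mult frob_xm1)
  have "xm1 m dvd kap q m (kap q m c * P)" using h kap_dvd_iff P_def by simp
  moreover have "eqm m (kap q m (kap q m c * P)) (c * tau m (frob q P))"
  proof -
    have "eqm m (kap q m (kap q m c * P)) (kap q m (kap q m c) * kap q m P)" by (rule kap_mult)
    also have "eqm m (kap q m (kap q m c) * kap q m P) (c * tau m (frob q P))"
      by (intro eqm_mult kap_kap kap_tau)
    finally show ?thesis .
  qed
  ultimately have "xm1 m dvd c * tau m (frob q P)" by (metis eqm_0 eqm_sym eqm_trans)
  then have "reflect_poly (frob q B0) dvd c" using lemmaQ[OF fPB] by simp
  moreover have "reflect_poly (frob q B0) = smult ((- inverse u) ^ q) g"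
  proof -
    have g0: "coeff g 0 \<noteq> 0" using coeff0_div(1) gh by metis
    have "frob q B0 = smult ((- inverse u) ^ q) (reflect_poly g)"
      by (simp only: B0_def frob_smult frob_reflect frob_frob)
    then show ?thesis using g0 by (simp add: reflect_poly_smult)
  qed
  ultimately show ?thesis using smult_dvd_cancel by metis
qed


lemma key_mod: "i < m \<Longrightarrow> j < m \<Longrightarrow> (((m - 1) * i + j) mod m = 0 \<longleftrightarrow> j = i)"
proof (cases i)
  case 0
  assume "j < m" then show ?thesis using 0 by simp
next
  case (Suc k)
  assume im: "i < m" and jm: "j < m"
  have e: "(m - 1) * i + j = (m - i + j) + m * k" using Suc im by (cases m) (auto simp: algebra_simps)
  have "((m - 1) * i + j) mod m = (m - i + j) mod m" unfolding e by simp
  also have "\<dots> = (if m - i + j < m then m - i + j else j - i)"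
  proof (cases "m - i + j < m")
    case True then show ?thesis by simp
  next
    case False
    then have "(m - i + j) mod m = (m - i + j - m) mod m" by (simp add: le_mod_geq)
    also have "m - i + j - m = j - i" using im False by simp
    also have "(j - i) mod m = j - i" using jm by simp
    finally show ?thesis using False by simp
  qed
  finally show ?thesis using Suc im jm by auto
qed

lemma sum_monoms: "degree p < m \<Longrightarrow> p = (\<Sum>i<m. monom (coeff p i) i)"
  using poly_as_sum_of_monoms'[of p "m - 1"] mpos
  by (metis Suc_diff_1 lessThan_Suc_atMost less_Suc_eq_le)

lemma H1:
  assumes da: "degree a < m" and dc: "degree (c::'a poly) < m"
  shows "(\<Sum>i<m. coeff a i ^ q * coeff c i) = coeff (rep m (kap q m a * c)) 0"
proof -
  have "rep m (kap q m a * c) = rep m (tau m (frob q a) * c)"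
    using eqm_mult[OF kap_tau eqm_refl[of m c]] by (simp add: eqm_def)
  also have "frob q a = (\<Sum>i<m. monom (coeff a i ^ q) i)"
    using sum_monoms[of "frob q a"] da by (simp add: degree_frob coeff_frob)
  also have "tau m (\<Sum>i<m. monom (coeff a i ^ q) i) = (\<Sum>i<m. monom (coeff a i ^ q) ((m - 1) * i))"
    by (simp add: tau_sum tau_monom)
  also have "(\<Sum>i<m. monom (coeff a i ^ q) ((m - 1) * i)) * c
      = (\<Sum>i<m. \<Sum>j<m. monom (coeff a i ^ q * coeff c j) ((m - 1) * i + j))"
    by (subst (1) sum_monoms[OF dc]) (simp add: sum_product mult_monom)
  also have "rep m \<dots> = (\<Sum>i<m. \<Sum>j<m. monom (coeff a i ^ q * coeff c j) (((m - 1) * i + j) mod m))"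
    by (simp add: rep_sum rep_monom mpos)
  finally have "coeff (rep m (kap q m a * c)) 0
      = (\<Sum>i<m. \<Sum>j<m. if ((m - 1) * i + j) mod m = 0 then coeff a i ^ q * coeff c j else 0)"
    by (simp add: coeff_sum coeff_monom eq_commute[of 0])
  also have "\<dots> = (\<Sum>i<m. coeff a i ^ q * coeff c i)"
  proof (rule sum.cong[OF refl])
    fix i assume "i \<in> {..<m}"
    then have "(\<Sum>j<m. if ((m - 1) * i + j) mod m = 0 then coeff a i ^ q * coeff c j else 0)
        = (\<Sum>j<m. if j = i then coeff a i ^ q * coeff c j else 0)"
      using key_mod by (intro sum.cong) auto
    also have "\<dots> = coeff a i ^ q * coeff c i" using \<open>i \<in> {..<m}\<close> by (simp add: sum.delta)
    finally show "(\<Sum>j<m. if ((m - 1) * i + j) mod m = 0 then coeff a i ^ q * coeff c j else 0)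
        = coeff a i ^ q * coeff c i" .
  qed
  finally show ?thesis by simp
qed


lemma H2:
  assumes h: "\<And>r. coeff (rep m (r * w)) 0 = (0::'a)"
  shows "xm1 m dvd w"
proof -
  have "coeff (rep m w) j = 0" for j
  proof (cases "j < m")
    case True
    have "(\<Sum>i<m. coeff (monom (1::'a) j) i ^ q * coeff (rep m w) i)
        = coeff (rep m (kap q m (monom 1 j) * rep m w)) 0"
      by (rule H1) (use True mpos degree_rep[OF mpos] in \<open>auto simp: degree_monom_eq\<close>)
    also have "rep m (kap q m (monom 1 j) * rep m w) = rep m (kap q m (monom 1 j) * w)"
      using eqm_mult[OF eqm_refl eqm_rep] by (simp add: eqm_def)
    also have "coeff \<dots> 0 = 0" by (rule h)
    also have "(\<Sum>i<m. coeff (monom (1::'a) j) i ^ q * coeff (rep m w) i) = coeff (rep m w) j"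
    proof -
      have "\<And>i. coeff (monom (1::'a) j) i ^ q * coeff (rep m w) i = (if i = j then coeff (rep m w) i else 0)"
        using fzero by (simp add: coeff_monom)
      then show ?thesis using True by (simp add: sum.delta)
    qed
    finally show ?thesis .
  next
    case False
    then show ?thesis using degree_rep[OF mpos, of w] by (simp add: coeff_eq_0)
  qed
  then have "rep m w = 0" by (simp add: poly_eq_iff)
  then show ?thesis by (simp add: rep_def mod_eq_0_iff_dvd)
qed

lemma herm_eq:
  assumes "degree c1 < m" "degree c2 < m" "degree a < m" "degree b < m"
  shows "herm q m (a, b) (c1, c2) = coeff (rep m (kap q m a * c1 + kap q m b * (c2::'a poly))) 0"
  using assms by (simp add: herm_def H1 rep_add)

lemma rdvd_iff: "g dvd xm1 m \<Longrightarrow> g dvd rep m p \<longleftrightarrow> g dvd (p::'a::field_gcd poly)"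
  unfolding rep_def by (metis dvd_mod_iff)

lemma code_mem:
  assumes "m > 0" "degree a < m" "degree b < m" "g1 dvd xm1 m" "g2 dvd xm1 m"
  shows "(a, b) \<in> qc_code m g1 (v1 * g1) 0 g2 \<longleftrightarrow>
         g1 dvd a \<and> g2 dvd rep m (b - a * (v1::'a::field_gcd poly))"
proof
  assume "(a, b) \<in> qc_code m g1 (v1 * g1) 0 g2"
  then obtain r1 r2 where a: "a = rep m (r1 * g1)" and b: "b = rep m (r1 * (v1 * g1) + r2 * g2)"
    by (auto simp: qc_code_def)
  have "g1 dvd a" using a rdvd_iff[OF assms(4)] by simp
  moreover have "rep m (b - a * v1) = rep m (r2 * g2)"
  proof -
    have "eqm m (b - a * v1) ((r1 * (v1 * g1) + r2 * g2) - (r1 * g1) * v1)"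
      unfolding a b by (intro eqm_diff eqm_mult eqm_rep eqm_refl)
    then show ?thesis by (simp add: eqm_def algebra_simps)
  qed
  then have "g2 dvd rep m (b - a * v1)" using assms(5) rdvd_iff by (metis dvd_triv_right)
  ultimately show "g1 dvd a \<and> g2 dvd rep m (b - a * v1)" by blast
next
  assume h: "g1 dvd a \<and> g2 dvd rep m (b - a * v1)"
  then obtain r1 where r1: "a = g1 * r1" by (auto simp: dvd_def)
  from h have "g2 dvd b - a * v1" using assms(5) rdvd_iff by blast
  then obtain r2 where r2: "b - a * v1 = g2 * r2" by (auto simp: dvd_def)
  have "a = rep m (r1 * g1 + 0 * 0)" using r1 rep_small[OF assms(2)] by (simp add: mult.commute)
  moreover have "b = rep m (r1 * (v1 * g1) + r2 * g2)"
  proof -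
    have "b = r1 * (v1 * g1) + r2 * g2" using r1 r2 by (simp add: algebra_simps eq_diff_eq)
    then show ?thesis using rep_small[OF assms(3)] by simp
  qed
  ultimately show "(a, b) \<in> qc_code m g1 (v1 * g1) 0 g2"
    unfolding qc_code_def by (metis (mono_tags, lifting) mem_Collect_eq mult_zero_right add_0_right)
qed


lemma dual_char:
  "(a, b) \<in> herm_dual q m (qc_code m g1 (v1 * g1) 0 g2) \<longleftrightarrow>
     degree a < m \<and> degree b < m \<and> xm1 m dvd kap q m a * g1 + kap q m b * (v1 * g1)
     \<and> xm1 m dvd kap q m b * (g2::'a poly)"
proof -
  define W1 where "W1 = kap q m a * g1 + kap q m b * (v1 * g1)"
  define W2 where "W2 = kap q m b * g2"
  have hc: "herm q m (a, b) (rep m (r1 * g1 + r2 * 0), rep m (r1 * (v1 * g1) + r2 * g2))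
      = coeff (rep m (r1 * W1 + r2 * W2)) 0"
    if "degree a < m" "degree b < m" for r1 r2
  proof -
    have "herm q m (a, b) (rep m (r1 * g1 + r2 * 0), rep m (r1 * (v1 * g1) + r2 * g2))
      = coeff (rep m (kap q m a * rep m (r1 * g1 + r2 * 0) + kap q m b * rep m (r1 * (v1 * g1) + r2 * g2))) 0"
      by (rule herm_eq) (use that degree_rep[OF mpos] in auto)
    also have "rep m (kap q m a * rep m (r1 * g1 + r2 * 0) + kap q m b * rep m (r1 * (v1 * g1) + r2 * g2))
       = rep m (kap q m a * (r1 * g1 + r2 * 0) + kap q m b * (r1 * (v1 * g1) + r2 * g2))"
      using eqm_add[OF eqm_mult[OF eqm_refl eqm_rep] eqm_mult[OF eqm_refl eqm_rep]]
      by (simp add: eqm_def)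
    also have "kap q m a * (r1 * g1 + r2 * 0) + kap q m b * (r1 * (v1 * g1) + r2 * g2) = r1 * W1 + r2 * W2"
      by (simp add: W1_def W2_def algebra_simps)
    finally show ?thesis .
  qed
  show ?thesis
  proof
    assume h: "(a, b) \<in> herm_dual q m (qc_code m g1 (v1 * g1) 0 g2)"
    then have da: "degree a < m" "degree b < m" by (auto simp: herm_dual_def ambient_def)
    have all: "coeff (rep m (r1 * W1 + r2 * W2)) 0 = 0" for r1 r2
    proof -
      have "(rep m (r1 * g1 + r2 * 0), rep m (r1 * (v1 * g1) + r2 * g2)) \<in> qc_code m g1 (v1 * g1) 0 g2"
        unfolding qc_code_def by blast
      then show ?thesis using h hc[OF da] by (auto simp: herm_dual_def)
    qed
    have "xm1 m dvd W1" by (rule H2) (use all[of _ 0] in simp)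
    moreover have "xm1 m dvd W2" by (rule H2) (use all[of 0] in simp)
    ultimately show "degree a < m \<and> degree b < m \<and> xm1 m dvd kap q m a * g1 + kap q m b * (v1 * g1)
     \<and> xm1 m dvd kap q m b * g2" using da by (simp add: W1_def W2_def)
  next
    assume h: "degree a < m \<and> degree b < m \<and> xm1 m dvd kap q m a * g1 + kap q m b * (v1 * g1)
     \<and> xm1 m dvd kap q m b * g2"
    then have da: "degree a < m" "degree b < m" by auto
    have "xm1 m dvd r1 * W1 + r2 * W2" for r1 r2 using h by (simp add: W1_def W2_def)
    then have "rep m (r1 * W1 + r2 * W2) = 0" for r1 r2 by (simp add: rep_def)
    then show "(a, b) \<in> herm_dual q m (qc_code m g1 (v1 * g1) 0 g2)"
      using hc[OF da] da by (auto simp: herm_dual_def ambient_def qc_code_def)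
  qed
qed


lemma main_ctx:
  assumes m1: "lead_coeff g1 = 1" and d1: "g1 dvd xm1 m"
    and m2: "lead_coeff g2 = 1" and d2: "g2 dvd xm1 m" and dv: "degree (v1::'a poly) < m"
  shows "herm_dual_containing q m (qc_code m g1 (v1 * g1) 0 g2) \<longleftrightarrow>
           rdvd m g1 (cperpH q m g1)
         \<and> rdvd m g1 (cperpH q m g2 * frob q (cbar m v1))
         \<and> rdvd m g2 (cperpH q m g2 * (1 + v1 * frob q (cbar m v1)))"
proof -
  define P1 where "P1 = cperpH q m g1"
  define P2 where "P2 = cperpH q m g2"
  define V where "V = kap q m v1"
  have Vdef: "frob q (cbar m v1) = V" by (simp add: V_def kap_def)
  have P1X: "P1 dvd xm1 m" using perp_dvd[OF m1 d1] by (simp add: P1_def)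
  have P2X: "P2 dvd xm1 m" using perp_dvd[OF m2 d2] by (simp add: P2_def)
  have W1: "xm1 m dvd kap q m a * g1 + kap q m b * (v1 * g1) \<longleftrightarrow> P1 dvd a + b * V" for a b
  proof -
    have "eqm m (kap q m (a + b * V)) (kap q m a + kap q m (b * V))" by (rule kap_add)
    also have "eqm m (kap q m a + kap q m (b * V)) (kap q m a + kap q m b * v1)"
    proof (rule eqm_add[OF eqm_refl])
      have "eqm m (kap q m (b * V)) (kap q m b * kap q m V)" by (rule kap_mult)
      also have "eqm m (kap q m b * kap q m V) (kap q m b * v1)"
        unfolding V_def by (rule eqm_mult[OF eqm_refl kap_kap])
      finally show "eqm m (kap q m (b * V)) (kap q m b * v1)" .
    qed
    finally have "eqm m (kap q m (a + b * V) * g1) ((kap q m a + kap q m b * v1) * g1)"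
      by (intro eqm_mult eqm_refl)
    moreover have "(kap q m a + kap q m b * v1) * g1 = kap q m a * g1 + kap q m b * (v1 * g1)"
      by (simp add: algebra_simps)
    ultimately have "xm1 m dvd kap q m a * g1 + kap q m b * (v1 * g1) \<longleftrightarrow> xm1 m dvd kap q m (a + b * V) * g1"
      using eqm_dvd_iff by metis
    also have "\<dots> \<longleftrightarrow> P1 dvd a + b * V" unfolding P1_def by (rule Plemma[OF m1 d1])
    finally show ?thesis .
  qed
  have W2: "xm1 m dvd kap q m b * g2 \<longleftrightarrow> P2 dvd b" for b
    unfolding P2_def by (rule Plemma[OF m2 d2])
  have LHS: "herm_dual_containing q m (qc_code m g1 (v1 * g1) 0 g2) \<longleftrightarrow>
      (\<forall>a b. degree a < m \<and> degree b < m \<and> P1 dvd a + b * V \<and> P2 dvd b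
          \<longrightarrow> g1 dvd a \<and> g2 dvd rep m (b - a * v1))"
  proof -
    have E: "(a, b) \<in> herm_dual q m (qc_code m g1 (v1 * g1) 0 g2) \<longleftrightarrow>
       degree a < m \<and> degree b < m \<and> P1 dvd a + b * V \<and> P2 dvd b" for a b
      by (simp only: dual_char W1 W2)
    have F: "degree a < m \<Longrightarrow> degree b < m \<Longrightarrow> (a, b) \<in> qc_code m g1 (v1 * g1) 0 g2 \<longleftrightarrow>
         g1 dvd a \<and> g2 dvd rep m (b - a * v1)" for a b
      by (rule code_mem[OF mpos _ _ d1 d2])
    show ?thesis unfolding herm_dual_containing_def
    proof
      assume S: "herm_dual q m (qc_code m g1 (v1 * g1) 0 g2) \<subseteq> qc_code m g1 (v1 * g1) 0 g2"
      show "\<forall>a b. degree a < m \<and> degree b < m \<and> P1 dvd a + b * V \<and> P2 dvd b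
          \<longrightarrow> g1 dvd a \<and> g2 dvd rep m (b - a * v1)"
      proof (intro allI impI)
        fix a b assume Q: "degree a < m \<and> degree b < m \<and> P1 dvd a + b * V \<and> P2 dvd b"
        then have "(a, b) \<in> qc_code m g1 (v1 * g1) 0 g2" using S E by blast
        then show "g1 dvd a \<and> g2 dvd rep m (b - a * v1)" using F Q by blast
      qed
    next
      assume R: "\<forall>a b. degree a < m \<and> degree b < m \<and> P1 dvd a + b * V \<and> P2 dvd b
          \<longrightarrow> g1 dvd a \<and> g2 dvd rep m (b - a * v1)"
      show "herm_dual q m (qc_code m g1 (v1 * g1) 0 g2) \<subseteq> qc_code m g1 (v1 * g1) 0 g2"
      proof
        fix u assume u: "u \<in> herm_dual q m (qc_code m g1 (v1 * g1) 0 g2)"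
        obtain a b where ab: "u = (a, b)" by (cases u)
        have Q: "degree a < m \<and> degree b < m \<and> P1 dvd a + b * V \<and> P2 dvd b" using u ab E by blast
        then have "g1 dvd a \<and> g2 dvd rep m (b - a * v1)" using R by blast
        then show "u \<in> qc_code m g1 (v1 * g1) 0 g2" using F Q ab by blast
      qed
    qed
  qed
  have D: "g2 dvd P1 * v1" if B: "g1 dvd P2 * V"
  proof (rule Dlemma[OF m2 d2])
    obtain k where k: "P2 * V = g1 * k" using B by (auto simp: dvd_def)
    have "xm1 m dvd kap q m P1 * g1" using Plemma[OF m1 d1, of P1] by (simp add: P1_def)
    moreover have "kap q m P1 * (P2 * V) = (kap q m P1 * g1) * k" unfolding k by (simp add: mult.assoc)
    ultimately have "xm1 m dvd kap q m P1 * (P2 * V)" by (metis dvd_mult2)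
    moreover have "eqm m (kap q m (P1 * v1) * P2) (kap q m P1 * (P2 * V))"
    proof -
      have "eqm m (kap q m (P1 * v1) * P2) (kap q m P1 * kap q m v1 * P2)"
        by (intro eqm_mult kap_mult eqm_refl)
      then show ?thesis by (simp add: V_def algebra_simps)
    qed
    ultimately show "xm1 m dvd kap q m (P1 * v1) * cperpH q m g2"
      using eqm_dvd_iff unfolding P2_def by blast
  qed
  have eq: "(rdvd m g1 (cperpH q m g1)
         \<and> rdvd m g1 (cperpH q m g2 * frob q (cbar m v1))
         \<and> rdvd m g2 (cperpH q m g2 * (1 + v1 * frob q (cbar m v1)))) \<longleftrightarrow>
       (g1 dvd P1 \<and> g1 dvd P2 * V \<and> g2 dvd P2 * (1 + v1 * V))"
    by (simp only: rdvd_def rdvd_iff[OF d1] rdvd_iff[OF d2] P1_def P2_def Vdef)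
  have main: "(\<forall>a b. degree a < m \<and> degree b < m \<and> P1 dvd a + b * V \<and> P2 dvd b
          \<longrightarrow> g1 dvd a \<and> g2 dvd rep m (b - a * v1)) \<longleftrightarrow>
       (g1 dvd P1 \<and> g1 dvd P2 * V \<and> g2 dvd P2 * (1 + v1 * V))"
  proof (intro iffI conjI allI impI)
    assume H: "\<forall>a b. degree a < m \<and> degree b < m \<and> P1 dvd a + b * V \<and> P2 dvd b
          \<longrightarrow> g1 dvd a \<and> g2 dvd rep m (b - a * v1)"
    have "g1 dvd rep m P1 \<and> g2 dvd rep m (0 - rep m P1 * v1)"
    proof (rule H[rule_format])
      show "degree (rep m P1) < m \<and> degree 0 < m \<and> P1 dvd rep m P1 + 0 * V \<and> P2 dvd 0"
        using degree_rep[OF mpos, of P1] mpos rdvd_iff[OF P1X, of P1] by simp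
    qed
    then have "g1 dvd rep m P1" by simp
    then show "g1 dvd P1" using rdvd_iff[OF d1] by simp
    have hyp: "degree (rep m (- (P2 * V))) < m \<and> degree (rep m P2) < m \<and>
        P1 dvd rep m (- (P2 * V)) + rep m P2 * V \<and> P2 dvd rep m P2"
    proof (intro conjI)
      show "P2 dvd rep m P2" using rdvd_iff[OF P2X] by simp
      have "eqm m (rep m (- (P2 * V)) + rep m P2 * V) (- (P2 * V) + P2 * V)"
        by (intro eqm_add eqm_mult eqm_rep eqm_refl)
      then have "xm1 m dvd rep m (- (P2 * V)) + rep m P2 * V" by (simp add: eqm_0)
      then show "P1 dvd rep m (- (P2 * V)) + rep m P2 * V" using P1X dvd_trans by blast
    qed (use degree_rep[OF mpos] in auto)
    note c = H[rule_format, OF hyp]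
    show "g1 dvd P2 * V" using c rdvd_iff[OF d1] by simp
    have "rep m (rep m P2 - rep m (- (P2 * V)) * v1) = rep m (P2 * (1 + v1 * V))"
    proof -
      have "eqm m (rep m P2 - rep m (- (P2 * V)) * v1) (P2 - (- (P2 * V)) * v1)"
        by (intro eqm_diff eqm_mult eqm_rep eqm_refl)
      then show ?thesis by (simp add: eqm_def algebra_simps)
    qed
    then show "g2 dvd P2 * (1 + v1 * V)" using c rdvd_iff[OF d2] by metis
  next
    fix a b
    assume ABC: "g1 dvd P1 \<and> g1 dvd P2 * V \<and> g2 dvd P2 * (1 + v1 * V)"
      and Q: "degree a < m \<and> degree b < m \<and> P1 dvd a + b * V \<and> P2 dvd b"
    from ABC have A: "g1 dvd P1" and B: "g1 dvd P2 * V" and C: "g2 dvd P2 * (1 + v1 * V)" by auto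
    obtain s where s: "b = P2 * s" using Q by (auto simp: dvd_def)
    obtain t where t: "a + b * V = P1 * t" using Q by (auto simp: dvd_def)
    have a: "a = P1 * t - (P2 * V) * s" using s t by (simp add: algebra_simps eq_diff_eq)
    show "g1 dvd a" unfolding a using dvd_diff[OF dvd_mult2[OF A, of t] dvd_mult2[OF B, of s]] .
    have "b - a * v1 = (P2 * (1 + v1 * V)) * s - (P1 * v1) * t"
      unfolding s a by (simp add: algebra_simps)
    then have "g2 dvd b - a * v1" using C D[OF B] by (simp add: dvd_diff dvd_mult2)
    then show "g2 dvd rep m (b - a * v1)" using rdvd_iff[OF d2] by simp
  qed
  show ?thesis using LHS eq main by simp
qed

end

theorem mainTheorem8:
  fixes q m :: nat and g1 g2 v1 :: "'a::{finite,field_gcd} poly"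
  assumes "\<exists>p e. prime p \<and> e > 0 \<and> q = p ^ e"
    and "CARD('a) = q ^ 2"
    and "m > 0"
    and "lead_coeff g1 = 1" and "g1 dvd xm1 m"
    and "lead_coeff g2 = 1" and "g2 dvd xm1 m"
    and "degree v1 < m"
  shows "herm_dual_containing q m (qc_code m g1 (v1 * g1) 0 g2) \<longleftrightarrow>
           rdvd m g1 (cperpH q m g1)
         \<and> rdvd m g1 (cperpH q m g2 * frob q (cbar m v1))
         \<and> rdvd m g2 (cperpH q m g2 * (1 + v1 * frob q (cbar m v1)))"
proof -
  note ff = frob_facts[OF assms(1,2)]
  show ?thesis by (rule main_ctx[OF ff(1) assms(3) ff(2) ff(3) assms(4-8)])
qed

end
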